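(* The following rules are sound, i.e. for every instance, if all premisses are valid then the conclusion is valid ($\Gamma,\Delta$ arbitrary finite multisets of compound diagrams): (a) for a pure Euler diagram $d=(L,Z)$ such that every $z\in M(d)$ has some $\ell\in L$ with $\mathrm{adj}(z,\ell)\in M(d)$, and $\{c_1,\dots,c_k\}\subseteq L$ the maximal set of contours with $M(d\setminus c_i)\neq\emptyset$: $(\mathrm{red}L)$ from $d\setminus c_1,\dots,d\setminus c_k,\Gamma\Rightarrow\Delta$ infer $d,\Gamma\Rightarrow\Delta$; $(\mathrm{red}R)$ from $\Gamma\Rightarrow\Delta,d\setminus c_i$ for all $1\le i\le k$ infer $\Gamma\Rightarrow\Delta,d$; (b) for a pure Euler diagram $d=(L,Z)$ with $|M(d)|>1$ and pure Euler diagrams $d_1=(L,Z_1)$, $d_2=(L,Z_2)$ with $Z_1\cap Z_2=Z$: $(\mathrm{mzsep}L)$ from $d_1,d_2,\Gamma\Rightarrow\Delta$ infer $d,\Gamma\Rightarrow\Delta$; $(\mathrm{mzsep}R)$ from $\Gamma\Rightarrow\Delta,d_1$ and $\Gamma\Rightarrow\Delta,d_2$ infer $\Gamma\Rightarrow\Delta,d$; (c) for a pure Euler diagram $d$ with $M(d)=\{z\}$, $z=(\{n_1,\dots,n_k\},\{o_1,\dots,o_l\})$: $(\mathrm{impdec}L)$ from $d,\Gamma\Rightarrow P_{n_i}$ for all $1\le i\le k$ and $P_{o_j},\Gamma\Rightarrow\Delta$ for all $1\le j\le l$ infer $d,\Gamma\Rightarrow\Delta$; $(\mathrm{impdec}R)$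 from $P_{n_1},\dots,P_{n_k},\Gamma\Rightarrow P_{o_1},\dots,P_{o_l}$ infer $\Gamma\Rightarrow\Delta,d$.
   Context: Fix a countably infinite set $\mathcal V$ of propositional variables. A Heyting algebra $(H,\vee,\wedge,\to,0,1)$ is a bounded distributive lattice with a binary operation $\to$ such that $c\wedge a\le b\iff c\le a\to b$; $-a:=a\to0$; empty meets are $1$, empty joins $0$. A valuation is a map $v:\mathcal V\to H$. For a finite $L\subset\mathcal V$, a zone over $L$ is a pair $z=(\mathrm{in}(z),\mathrm{out}(z))$ of disjoint subsets of $L$ with union $L$; $\mathcal Z(L)$ is the set of all zones over $L$; $v(z)=\bigwedge_{c\in\mathrm{in}(z)}v(c)\wedge\bigwedge_{c\in\mathrm{out}(z)}-v(c)$ and $m_v(z)=\big(\bigwedge_{c\in\mathrm{in}(z)}v(c)\big)\to\big(\bigvee_{c\in\mathrm{out}(z)}v(c)\big)$. Unitary diagrams are of three kinds: Venn diagrams $d=(L,\mathcal Z(L),S)$, $S\subseteq\mathcal Z(L)$ shaded, $[\![d]\!]_v=\bigvee_{z\in S}v(z)$; pure Euler diagrams $d=(L,Z)$, $Z\subseteq\mathcal Z(L)$ visible zones, missing zones $M(d)=\mathcal Z(L)\setminus Z$, $[\![d]\!]_v=\bigwedge_{z\in M(d)}m_v(z)$; Euler–Venn diagrams $d=(L,Z,S)$, $S\subseteq Z\subseteq\mathcal Z(L)$, $[\![d]\!]_v=[\![(L,Z)]\!]_v\to[\![(L,\mathcal Z(L),S)]\!]_v$. Positive literal $P_c=(\{c\},\mathcal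 Z(\{c\}),\{(\{c\},\emptyset)\})$ (a Venn diagram). Compound diagrams are built from unitary ones with $\wedge,\vee,\to$, interpreted by meet, join and Heyting implication. For $c\in L$, $\mathrm{adj}(z,c)$ is the zone obtained from $z$ by moving $c$ from $\mathrm{out}(z)$ to $\mathrm{in}(z)$ or vice versa. Reduction: $z\setminus c=(\mathrm{in}(z)\setminus\{c\},\mathrm{out}(z)\setminus\{c\})$; for pure Euler $d=(L,Z)$, $d\setminus c=(L\setminus\{c\},\{z\setminus c:z\in Z\})$. A sequent $\Gamma\Rightarrow\Delta$ (finite multisets of compound diagrams) is valid iff for every Heyting algebra and valuation $v$, $\bigwedge_{D\in\Gamma}[\![D]\!]_v\le\bigvee_{E\in\Delta}[\![E]\!]_v$. *)

theory Defs
  imports Main "HOL-Library.Multiset"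
begin

class heyting = bounded_lattice + distrib_lattice +
  fixes hto :: "'a \<Rightarrow> 'a \<Rightarrow> 'a"
  assumes hto_adj: "inf c a \<le> b \<longleftrightarrow> c \<le> hto a b"

definition hneg :: "'a::heyting \<Rightarrow> 'a" where
  "hneg a = hto a bot"

definition hmeet :: "'b set \<Rightarrow> ('b \<Rightarrow> 'a::heyting) \<Rightarrow> 'a" where
  "hmeet A f = Finite_Set.fold (\<lambda>x acc. inf (f x) acc) top A"

definition hjoin :: "'b set \<Rightarrow> ('b \<Rightarrow> 'a::heyting) \<Rightarrow> 'a" where
  "hjoin A f = Finite_Set.fold (\<lambda>x acc. sup (f x) acc) bot A"

text \<open>Propositional variables (contours) are natural numbers (a countably
infinite set). A zone is a pair (in, out).\<close>

type_synonym zone = "nat set \<times> nat set"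

definition zones :: "nat set \<Rightarrow> zone set" where
  "zones L = {(I, L - I) | I. I \<subseteq> L}"

datatype unitary =
    Venn "nat set" "zone set"                \<comment> \<open>(L, Z(L), S): labels and shaded zones\<close>
  | Euler "nat set" "zone set"               \<comment> \<open>(L, Z): labels and visible zones\<close>
  | EulerVenn "nat set" "zone set" "zone set"

datatype cdiag =
    Unit unitary
  | Conj cdiag cdiag
  | Disj cdiag cdiag
  | Impl cdiag cdiag

fun wf_unitary :: "unitary \<Rightarrow> bool" where
  "wf_unitary (Venn L S) = (finite L \<and> S \<subseteq> zones L)"
| "wf_unitary (Euler L Z) = (finite L \<and> Z \<subseteq> zones L)"
| "wf_unitary (EulerVenn L Z S) = (finite L \<and> S \<subseteq> Z \<and> Z \<subseteq> zones L)"

definition missing :: "nat set \<Rightarrow> zone set \<Rightarrow> zone set" where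
  "missing L Z = zones L - Z"

definition adj :: "zone \<Rightarrow> nat \<Rightarrow> zone" where
  "adj z c = (if c \<in> fst z then (fst z - {c}, snd z \<union> {c})
              else (fst z \<union> {c}, snd z - {c}))"

definition zone_red :: "zone \<Rightarrow> nat \<Rightarrow> zone" where
  "zone_red z c = (fst z - {c}, snd z - {c})"

definition euler_red :: "nat set \<Rightarrow> zone set \<Rightarrow> nat \<Rightarrow> unitary" where
  "euler_red L Z c = Euler (L - {c}) ((\<lambda>z. zone_red z c) ` Z)"

definition Pos :: "nat \<Rightarrow> cdiag" where
  "Pos c = Unit (Venn {c} {({c}, {})})"

definition zval :: "(nat \<Rightarrow> 'a::heyting) \<Rightarrow> zone \<Rightarrow> 'a" where
  "zval v z = inf (hmeet (fst z) v) (hmeet (snd z) (\<lambda>c. hneg (v c)))"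

definition mval :: "(nat \<Rightarrow> 'a::heyting) \<Rightarrow> zone \<Rightarrow> 'a" where
  "mval v z = hto (hmeet (fst z) v) (hjoin (snd z) v)"

fun usem :: "(nat \<Rightarrow> 'a::heyting) \<Rightarrow> unitary \<Rightarrow> 'a" where
  "usem v (Venn L S) = hjoin S (zval v)"
| "usem v (Euler L Z) = hmeet (missing L Z) (mval v)"
| "usem v (EulerVenn L Z S) = hto (hmeet (missing L Z) (mval v)) (hjoin S (zval v))"

fun sem :: "(nat \<Rightarrow> 'a::heyting) \<Rightarrow> cdiag \<Rightarrow> 'a" where
  "sem v (Unit u) = usem v u"
| "sem v (Conj a b) = inf (sem v a) (sem v b)"
| "sem v (Disj a b) = sup (sem v a) (sem v b)"
| "sem v (Impl a b) = hto (sem v a) (sem v b)"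

text \<open>Validity of a sequent Gamma => Delta in Heyting algebras of type 'a
(multiplicities are irrelevant for meets/joins by idempotence).\<close>
definition valid_in :: "'a::heyting itself \<Rightarrow> cdiag multiset \<Rightarrow> cdiag multiset \<Rightarrow> bool" where
  "valid_in _ \<Gamma> \<Delta> = (\<forall>v :: nat \<Rightarrow> 'a.
      hmeet (set_mset \<Gamma>) (sem v) \<le> hjoin (set_mset \<Delta>) (sem v))"

end

theory Submission
  imports Defs
begin

lemma cfi_inf: "comp_fun_idem (\<lambda>x acc. inf (f x) (acc::'a::heyting))"
proof
  show "(\<lambda>acc. inf (f y) acc) \<circ> (\<lambda>acc. inf (f x) acc) = (\<lambda>acc. inf (f x) acc) \<circ> (\<lambda>acc. inf (f y) acc)" for x y
    by (rule ext) (simp add: inf.left_commute)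
  show "(\<lambda>acc. inf (f x) acc) \<circ> (\<lambda>acc. inf (f x) acc) = (\<lambda>acc. inf (f x) acc)" for x
    by (rule ext) simp
qed
lemma cfi_sup: "comp_fun_idem (\<lambda>x acc. sup (f x) (acc::'a::heyting))"
proof
  show "(\<lambda>acc. sup (f y) acc) \<circ> (\<lambda>acc. sup (f x) acc) = (\<lambda>acc. sup (f x) acc) \<circ> (\<lambda>acc. sup (f y) acc)" for x y
    by (rule ext) (simp add: sup.left_commute)
  show "(\<lambda>acc. sup (f x) acc) \<circ> (\<lambda>acc. sup (f x) acc) = (\<lambda>acc. sup (f x) acc)" for x
    by (rule ext) simp
qed

lemma hmeet_empty[simp]: "hmeet {} f = top" by (simp add: hmeet_def)
lemma hjoin_empty[simp]: "hjoin {} f = bot" by (simp add: hjoin_def)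
lemma hmeet_insert[simp]: "finite A \<Longrightarrow> hmeet (insert x A) f = inf (f x) (hmeet A f)"
  unfolding hmeet_def by (rule comp_fun_idem_on.fold_insert_idem[OF cfi_inf[unfolded comp_fun_idem_def']]) auto
lemma hjoin_insert[simp]: "finite A \<Longrightarrow> hjoin (insert x A) f = sup (f x) (hjoin A f)"
  unfolding hjoin_def by (rule comp_fun_idem_on.fold_insert_idem[OF cfi_sup[unfolded comp_fun_idem_def']]) auto

lemma hmeet_ge_iff: "finite A \<Longrightarrow> (y \<le> hmeet A f) = (\<forall>a\<in>A. y \<le> f a)"
  by (induction A rule: finite_induct) auto
lemma hjoin_le_iff: "finite A \<Longrightarrow> (hjoin A f \<le> y) = (\<forall>a\<in>A. f a \<le> y)"
  by (induction A rule: finite_induct) auto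
lemma hmeet_lower: "finite A \<Longrightarrow> a \<in> A \<Longrightarrow> hmeet A f \<le> f a"
  using hmeet_ge_iff by blast
lemma hjoin_upper: "finite A \<Longrightarrow> a \<in> A \<Longrightarrow> f a \<le> hjoin A f"
  using hjoin_le_iff by blast

lemma hmeet_union: "finite A \<Longrightarrow> finite B \<Longrightarrow> hmeet (A \<union> B) f = inf (hmeet A f) (hmeet B f)"
  by (rule antisym) (auto simp: hmeet_ge_iff intro: hmeet_lower le_infI1 le_infI2)
lemma hmeet_image: "finite A \<Longrightarrow> hmeet (g ` A) f = hmeet A (\<lambda>x. f (g x))"
  by (rule antisym) (auto simp: hmeet_ge_iff intro: hmeet_lower)
lemma hjoin_image: "finite A \<Longrightarrow> hjoin (g ` A) f = hjoin A (\<lambda>x. f (g x))"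
  by (rule antisym) (auto simp: hjoin_le_iff intro: hjoin_upper)

lemma hto_mp: "inf (hto a b) a \<le> b" using hto_adj by blast
lemma hto_mono: "a' \<le> a \<Longrightarrow> b \<le> b' \<Longrightarrow> hto a b \<le> hto a' b'"
proof -
  assume "a' \<le> a" "b \<le> b'"
  have "inf (hto a b) a' \<le> inf (hto a b) a" using \<open>a' \<le> a\<close> by (simp add: le_infI2)
  also have "\<dots> \<le> b" by (rule hto_mp)
  finally show ?thesis using \<open>b \<le> b'\<close> hto_adj by (meson order_trans)
qed

lemma hto_split: "inf (hto (inf c a) b) (hto a (sup b c)) \<le> hto a b"
proof -
  let ?X = "hto (inf c a) b" and ?Y = "hto a (sup b c)"
  have 1: "inf ?Y a \<le> sup b c" by (rule hto_mp)
  have 2: "inf ?X (inf c a) \<le> b" by (rule hto_mp)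
  have "inf (inf ?X ?Y) a \<le> inf (inf ?X a) (sup b c)"
  proof (rule le_infI)
    show "inf (inf ?X ?Y) a \<le> inf ?X a" by (rule inf_mono) simp_all
    have "inf (inf ?X ?Y) a \<le> inf ?Y a" by (rule inf_mono) simp_all
    thus "inf (inf ?X ?Y) a \<le> sup b c" using 1 by (rule order_trans)
  qed
  also have "\<dots> = sup (inf (inf ?X a) b) (inf (inf ?X a) c)" by (rule inf_sup_distrib1)
  also have "\<dots> \<le> b"
  proof (rule sup_least)
    show "inf (inf ?X a) b \<le> b" by simp
    have "inf (inf ?X a) c = inf ?X (inf c a)" by (simp add: inf.assoc inf.commute inf.left_commute)
    thus "inf (inf ?X a) c \<le> b" using 2 by simp
  qed
  finally show ?thesis using hto_adj by blast
qed

lemma meet_sup_distrib_le: "finite A \<Longrightarrow> (\<forall>a\<in>A. x \<le> sup (f a) D) \<Longrightarrow> x \<le> sup (hmeet A f) D"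
proof (induction A rule: finite_induct)
  case empty then show ?case by simp
next
  case (insert a A)
  hence "x \<le> inf (sup (f a) D) (sup (hmeet A f) D)" by simp
  also have "\<dots> = sup (inf (f a) (hmeet A f)) D" by (simp add: sup_inf_distrib2)
  finally show ?case using insert by simp
qed

lemma inf_join_le: "finite A \<Longrightarrow> (\<forall>a\<in>A. inf x (f a) \<le> D) \<Longrightarrow> inf x (hjoin A f) \<le> D"
proof (induction A rule: finite_induct)
  case empty then show ?case by simp
next
  case (insert a A)
  thus ?case by (simp add: inf_sup_distrib1)
qed


lemma zones_mem: "z \<in> zones L \<longleftrightarrow> fst z \<subseteq> L \<and> snd z = L - fst z"
  unfolding zones_def by (cases z) auto

lemma finite_zones: "finite L \<Longrightarrow> finite (zones L)"
proof -
  assume "finite L"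
  have "zones L = (\<lambda>I. (I, L - I)) ` Pow L" unfolding zones_def by auto
  thus ?thesis using \<open>finite L\<close> by simp
qed

lemma finite_missing: "finite L \<Longrightarrow> finite (missing L Z)"
  unfolding missing_def using finite_zones by blast

lemma sem_Pos[simp]: "sem v (Pos c) = v c"
  by (simp add: Pos_def zval_def)

lemma hmeet_mono_set: "finite B \<Longrightarrow> A \<subseteq> B \<Longrightarrow> hmeet B f \<le> hmeet A f"
  using finite_subset[of A B] by (auto simp: hmeet_ge_iff intro: hmeet_lower)
lemma hjoin_mono_set: "finite B \<Longrightarrow> A \<subseteq> B \<Longrightarrow> hjoin A f \<le> hjoin B f"
  using finite_subset[of A B] by (auto simp: hjoin_le_iff intro: hjoin_upper)

lemma red_le:
  assumes wf: "wf_unitary (Euler L Z)" and c: "c \<in> L"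
  shows "usem v (Euler L Z) \<le> usem v (euler_red L Z c)"
proof -
  have fL: "finite L" using wf by simp
  have "usem v (Euler L Z) \<le> mval v w" if w: "w \<in> missing (L - {c}) ((\<lambda>z. zone_red z c) ` Z)" for w
  proof -
    obtain I where I: "w = (I, (L - {c}) - I)" "I \<subseteq> L - {c}"
      using w unfolding missing_def zones_def by auto
    define z1 where "z1 = (insert c I, L - insert c I)"
    define z2 where "z2 = (I, L - I)"
    have z1z: "z1 \<in> zones L" "z2 \<in> zones L" using I c unfolding z1_def z2_def zones_def by auto
    have r1: "zone_red z1 c = w" and r2: "zone_red z2 c = w"
      using I unfolding z1_def z2_def zone_red_def by auto
    have wn: "w \<notin> (\<lambda>z. zone_red z c) ` Z" using w unfolding missing_def by simp
    have "z1 \<notin> Z" using wn r1 by (metis image_eqI)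
    moreover have "z2 \<notin> Z" using wn r2 by (metis image_eqI)
    ultimately have "z1 \<notin> Z" "z2 \<notin> Z" by auto
    hence m: "z1 \<in> missing L Z" "z2 \<in> missing L Z" using z1z unfolding missing_def by auto
    have fI: "finite I" using I fL finite_subset by blast
    have cI: "c \<notin> I" using I by auto
    have e1: "mval v z1 = hto (inf (v c) (hmeet I v)) (hjoin ((L - {c}) - I) v)"
    proof -
      have "L - insert c I = (L - {c}) - I" by auto
      thus ?thesis unfolding z1_def mval_def using fI by simp
    qed
    have "L - I = insert c ((L - {c}) - I)" using c cI by auto
    hence e2: "mval v z2 = hto (hmeet I v) (sup (hjoin ((L - {c}) - I) v) (v c))"
      unfolding z2_def mval_def using fL by (simp add: sup_commute)
    have e3: "mval v w = hto (hmeet I v) (hjoin ((L - {c}) - I) v)"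
      unfolding I(1) mval_def by simp
    have "usem v (Euler L Z) \<le> inf (mval v z1) (mval v z2)"
      using m finite_missing[OF fL] by (simp add: hmeet_lower)
    also have "\<dots> \<le> mval v w" unfolding e1 e2 e3 by (rule hto_split)
    finally show ?thesis .
  qed
  thus ?thesis unfolding euler_red_def using finite_missing[of "L - {c}"] fL
    by (simp add: hmeet_ge_iff)
qed

lemma red_key:
  assumes wf: "wf_unitary (Euler L Z)" and z: "z \<in> missing L Z" and l: "l \<in> L"
    and a: "adj z l \<in> missing L Z"
  shows "zone_red z l \<in> missing (L - {l}) ((\<lambda>z. zone_red z l) ` Z)"
    and "usem v (euler_red L Z l) \<le> mval v z"
proof -
  have fL: "finite L" using wf by simp
  obtain I where I: "z = (I, L - I)" "I \<subseteq> L" using z unfolding missing_def zones_def by auto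
  have zr: "zone_red z l = (I - {l}, (L - {l}) - (I - {l}))" using I unfolding zone_red_def by auto
  have "zone_red z l \<notin> (\<lambda>z. zone_red z l) ` Z"
  proof
    assume "zone_red z l \<in> (\<lambda>z. zone_red z l) ` Z"
    then obtain z' where z': "z' \<in> Z" "zone_red z' l = zone_red z l" by auto
    have "z' \<in> zones L" using z' wf by auto
    then obtain J where J: "z' = (J, L - J)" "J \<subseteq> L" unfolding zones_def by auto
    have "J - {l} = I - {l}" using z' J I unfolding zone_red_def by auto
    hence "z' = z \<or> z' = adj z l" using J I l unfolding adj_def by (cases "l \<in> I"; cases "l \<in> J") auto
    thus False using z' z a unfolding missing_def by auto
  qed
  moreover have "zone_red z l \<in> zones (L - {l})" using zr I unfolding zones_def by auto
  ultimately show m: "zone_red z l \<in> missing (L - {l}) ((\<lambda>z. zone_red z l) ` Z)"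
    unfolding missing_def by auto
  have "usem v (euler_red L Z l) \<le> mval v (zone_red z l)"
    unfolding euler_red_def using m finite_missing[of "L - {l}"] fL by (simp add: hmeet_lower)
  also have "\<dots> \<le> mval v z"
  proof -
    have fI: "finite I" using I fL finite_subset by blast
    show ?thesis unfolding mval_def zr using I fI fL
      by (auto intro!: hto_mono hmeet_mono_set hjoin_mono_set)
  qed
  finally show "usem v (euler_red L Z l) \<le> mval v z" .
qed


lemma hmeet_add[simp]: "hmeet (set_mset (add_mset d \<Gamma>)) f = inf (f d) (hmeet (set_mset \<Gamma>) f)"
  by simp
lemma hjoin_add[simp]: "hjoin (set_mset (add_mset d \<Gamma>)) f = sup (f d) (hjoin (set_mset \<Gamma>) f)"
  by simp

lemma partA_L:
  fixes H :: "'a::heyting itself"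
  assumes wf: "wf_unitary (Euler L Z)"
    and p: "valid_in H (image_mset (\<lambda>c. Unit (euler_red L Z c))
                    (mset_set {c\<in>L. missing (L - {c}) ((\<lambda>z. zone_red z c) ` Z) \<noteq> {}}) + \<Gamma>) \<Delta>"
  shows "valid_in H (add_mset (Unit (Euler L Z)) \<Gamma>) \<Delta>"
  unfolding valid_in_def
proof
  fix v :: "nat \<Rightarrow> 'a"
  let ?C = "{c\<in>L. missing (L - {c}) ((\<lambda>z. zone_red z c) ` Z) \<noteq> {}}"
  let ?f = "\<lambda>c. Unit (euler_red L Z c)"
  let ?U = "usem v (Euler L Z)" and ?G = "hmeet (set_mset \<Gamma>) (sem v)"
  have fL: "finite L" using wf by simp
  hence fC: "finite ?C" by simp
  have e: "set_mset (image_mset ?f (mset_set ?C) + \<Gamma>) = ?f ` ?C \<union> set_mset \<Gamma>" using fC by simp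
  have le: "inf ?U ?G \<le> sem v d" if d: "d \<in> ?f ` ?C \<union> set_mset \<Gamma>" for d
  proof (cases "d \<in> set_mset \<Gamma>")
    case True
    hence "?G \<le> sem v d" by (simp add: hmeet_lower)
    thus ?thesis by (simp add: le_infI2)
  next
    case False
    then obtain c where c: "c \<in> L" "d = ?f c" using d by auto
    have "?U \<le> usem v (euler_red L Z c)" by (rule red_le[OF wf c(1)])
    thus ?thesis using c(2) by (simp add: le_infI1 del: usem.simps)
  qed
  have fin: "finite (?f ` ?C \<union> set_mset \<Gamma>)" using fC by simp
  have "inf ?U ?G \<le> hmeet (?f ` ?C \<union> set_mset \<Gamma>) (sem v)"
    by (subst hmeet_ge_iff[OF fin]) (rule ballI, rule le)
  also have "\<dots> \<le> hjoin (set_mset \<Delta>) (sem v)"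
  proof -
    have "\<forall>v::nat \<Rightarrow> 'a. hmeet (set_mset (image_mset ?f (mset_set ?C) + \<Gamma>)) (sem v) \<le> hjoin (set_mset \<Delta>) (sem v)"
      using p unfolding valid_in_def by blast
    hence "\<forall>v::nat \<Rightarrow> 'a. hmeet (?f ` ?C \<union> set_mset \<Gamma>) (sem v) \<le> hjoin (set_mset \<Delta>) (sem v)"
      by (simp only: e simp_thms)
    thus ?thesis by blast
  qed
  finally show "hmeet (set_mset (add_mset (Unit (Euler L Z)) \<Gamma>)) (sem v) \<le> hjoin (set_mset \<Delta>) (sem v)"
    by (simp del: usem.simps)
qed

lemma partA_R:
  fixes H :: "'a::heyting itself"
  assumes wf: "wf_unitary (Euler L Z)"
    and adjc: "\<forall>z\<in>missing L Z. \<exists>l\<in>L. adj z l \<in> missing L Z"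
    and p: "\<forall>c\<in>{c\<in>L. missing (L - {c}) ((\<lambda>z. zone_red z c) ` Z) \<noteq> {}}.
          valid_in H \<Gamma> (add_mset (Unit (euler_red L Z c)) \<Delta>)"
  shows "valid_in H \<Gamma> (add_mset (Unit (Euler L Z)) \<Delta>)"
  unfolding valid_in_def
proof
  fix v :: "nat \<Rightarrow> 'a"
  have fL: "finite L" using wf by simp
  let ?G = "hmeet (set_mset \<Gamma>) (sem v)" and ?D = "hjoin (set_mset \<Delta>) (sem v)"
  have "?G \<le> sup (mval v z) ?D" if z: "z \<in> missing L Z" for z
  proof -
    obtain l where l: "l \<in> L" "adj z l \<in> missing L Z" using adjc z by blast
    have "missing (L - {l}) ((\<lambda>z. zone_red z l) ` Z) \<noteq> {}" using red_key(1)[OF wf z l] by blast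
    hence "valid_in H \<Gamma> (add_mset (Unit (euler_red L Z l)) \<Delta>)" using p l by simp
    hence "?G \<le> sup (usem v (euler_red L Z l)) ?D" unfolding valid_in_def by (simp del: usem.simps)
    also have "\<dots> \<le> sup (mval v z) ?D" by (rule sup_mono[OF red_key(2)[OF wf z l] order_refl])
    finally show ?thesis .
  qed
  hence "?G \<le> sup (hmeet (missing L Z) (mval v)) ?D"
    using meet_sup_distrib_le[OF finite_missing[OF fL]] by blast
  thus "?G \<le> hjoin (set_mset (add_mset (Unit (Euler L Z)) \<Delta>)) (sem v)" by simp
qed

lemma partB_eq:
  assumes "wf_unitary (Euler L Z)" "Z1 \<inter> Z2 = Z"
  shows "usem v (Euler L Z) = inf (usem v (Euler L Z1)) (usem v (Euler L Z2))"
proof -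
  have "missing L Z = missing L Z1 \<union> missing L Z2" using assms(2) unfolding missing_def by auto
  moreover have "finite L" using assms(1) by simp
  ultimately show ?thesis using finite_missing by (simp add: hmeet_union)
qed

lemma partB_L:
  fixes H :: "'a::heyting itself"
  assumes "wf_unitary (Euler L Z)" "Z1 \<inter> Z2 = Z"
    "valid_in H (add_mset (Unit (Euler L Z1)) (add_mset (Unit (Euler L Z2)) \<Gamma>)) \<Delta>"
  shows "valid_in H (add_mset (Unit (Euler L Z)) \<Gamma>) \<Delta>"
  unfolding valid_in_def
proof
  fix v :: "nat \<Rightarrow> 'a"
  have e: "usem v (Euler L Z) = inf (usem v (Euler L Z1)) (usem v (Euler L Z2))"
    by (rule partB_eq[OF assms(1,2)])
  have "hmeet (set_mset (add_mset (Unit (Euler L Z1)) (add_mset (Unit (Euler L Z2)) \<Gamma>))) (sem v)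
      \<le> hjoin (set_mset \<Delta>) (sem v)" using assms(3) unfolding valid_in_def by blast
  thus "hmeet (set_mset (add_mset (Unit (Euler L Z)) \<Gamma>)) (sem v) \<le> hjoin (set_mset \<Delta>) (sem v)"
    by (simp only: hmeet_add sem.simps e inf.assoc)
qed

lemma partB_R:
  fixes H :: "'a::heyting itself"
  assumes "wf_unitary (Euler L Z)" "Z1 \<inter> Z2 = Z"
    "valid_in H \<Gamma> (add_mset (Unit (Euler L Z1)) \<Delta>)"
    "valid_in H \<Gamma> (add_mset (Unit (Euler L Z2)) \<Delta>)"
  shows "valid_in H \<Gamma> (add_mset (Unit (Euler L Z)) \<Delta>)"
  unfolding valid_in_def
proof
  fix v :: "nat \<Rightarrow> 'a"
  have e: "usem v (Euler L Z) = inf (usem v (Euler L Z1)) (usem v (Euler L Z2))"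
    by (rule partB_eq[OF assms(1,2)])
  let ?G = "hmeet (set_mset \<Gamma>) (sem v)" and ?D = "hjoin (set_mset \<Delta>) (sem v)"
  have 1: "?G \<le> sup (usem v (Euler L Z1)) ?D" using assms(3) unfolding valid_in_def
    by (simp only: hjoin_add sem.simps)
  have 2: "?G \<le> sup (usem v (Euler L Z2)) ?D" using assms(4) unfolding valid_in_def
    by (simp only: hjoin_add sem.simps)
  have "?G \<le> inf (sup (usem v (Euler L Z1)) ?D) (sup (usem v (Euler L Z2)) ?D)"
    using 1 2 by (rule le_infI)
  thus "?G \<le> hjoin (set_mset (add_mset (Unit (Euler L Z)) \<Delta>)) (sem v)"
    by (simp only: hjoin_add sem.simps e sup_inf_distrib2)
qed

lemma partC_eq:
  assumes "wf_unitary (Euler L Z)" "missing L Z = {z}"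
  shows "usem v (Euler L Z) = mval v z" "finite (fst z)" "finite (snd z)"
proof -
  show "usem v (Euler L Z) = mval v z" using assms(2) by simp
  have "z \<in> zones L" using assms(2) unfolding missing_def by auto
  thus "finite (fst z)" "finite (snd z)" using assms(1) finite_subset unfolding zones_mem by auto
qed

lemma partC_L:
  fixes H :: "'a::heyting itself"
  assumes wf: "wf_unitary (Euler L Z)" and m: "missing L Z = {z}"
    and p1: "\<forall>n\<in>fst z. valid_in H (add_mset (Unit (Euler L Z)) \<Gamma>) {#Pos n#}"
    and p2: "\<forall>m\<in>snd z. valid_in H (add_mset (Pos m) \<Gamma>) \<Delta>"
  shows "valid_in H (add_mset (Unit (Euler L Z)) \<Gamma>) \<Delta>"
  unfolding valid_in_def
proof
  fix v :: "nat \<Rightarrow> 'a"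
  have e1: "usem v (Euler L Z) = mval v z" by (rule partC_eq(1)[OF wf m])
  have fi: "finite (fst z)" and fo: "finite (snd z)" using partC_eq[OF wf m] by auto
  let ?G = "hmeet (set_mset \<Gamma>) (sem v)" and ?D = "hjoin (set_mset \<Delta>) (sem v)"
  let ?x = "inf (mval v z) ?G"
  have "?x \<le> v n" if n: "n \<in> fst z" for n
  proof -
    have "hmeet (set_mset (add_mset (Unit (Euler L Z)) \<Gamma>)) (sem v) \<le> hjoin (set_mset {#Pos n#}) (sem v)"
      using p1 n unfolding valid_in_def by blast
    thus ?thesis by (simp add: e1 del: usem.simps)
  qed
  hence "?x \<le> hmeet (fst z) v" using fi by (simp add: hmeet_ge_iff)
  hence "?x \<le> inf (mval v z) (hmeet (fst z) v)" by (simp add: le_infI1)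
  also have "\<dots> \<le> hjoin (snd z) v" unfolding mval_def by (rule hto_mp)
  finally have "?x \<le> hjoin (snd z) v" .
  hence "?x = inf ?x (hjoin (snd z) v)" by (simp add: inf.absorb1)
  also have "\<dots> \<le> ?D"
  proof (rule inf_join_le[OF fo], rule ballI)
    fix m assume "m \<in> snd z"
    hence "hmeet (set_mset (add_mset (Pos m) \<Gamma>)) (sem v) \<le> ?D" using p2 unfolding valid_in_def by blast
    hence "inf (v m) ?G \<le> ?D" by simp
    moreover have "inf ?x (v m) \<le> inf (v m) ?G" by (simp add: le_infI1 le_infI2)
    ultimately show "inf ?x (v m) \<le> ?D" by (rule order_trans[rotated])
  qed
  finally show "hmeet (set_mset (add_mset (Unit (Euler L Z)) \<Gamma>)) (sem v) \<le> ?D"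
    by (simp add: e1 del: usem.simps)
qed

lemma partC_R:
  fixes H :: "'a::heyting itself"
  assumes wf: "wf_unitary (Euler L Z)" and m: "missing L Z = {z}"
    and p: "valid_in H (image_mset Pos (mset_set (fst z)) + \<Gamma>) (image_mset Pos (mset_set (snd z)))"
  shows "valid_in H \<Gamma> (add_mset (Unit (Euler L Z)) \<Delta>)"
  unfolding valid_in_def
proof
  fix v :: "nat \<Rightarrow> 'a"
  have e1: "usem v (Euler L Z) = mval v z" by (rule partC_eq(1)[OF wf m])
  have fi: "finite (fst z)" and fo: "finite (snd z)" using partC_eq[OF wf m] by auto
  let ?G = "hmeet (set_mset \<Gamma>) (sem v)" and ?D = "hjoin (set_mset \<Delta>) (sem v)"
  have "hmeet (set_mset (image_mset Pos (mset_set (fst z)) + \<Gamma>)) (sem v)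
     \<le> hjoin (set_mset (image_mset Pos (mset_set (snd z)))) (sem v)"
    using p unfolding valid_in_def by blast
  hence "hmeet (Pos ` fst z \<union> set_mset \<Gamma>) (sem v) \<le> hjoin (Pos ` snd z) (sem v)"
    using fi fo by simp
  hence "inf (hmeet (fst z) v) ?G \<le> hjoin (snd z) v"
    using fi fo by (simp add: hmeet_union hmeet_image hjoin_image)
  hence "?G \<le> mval v z" unfolding mval_def using hto_adj by (metis inf_commute)
  thus "?G \<le> hjoin (set_mset (add_mset (Unit (Euler L Z)) \<Delta>)) (sem v)"
    by (simp add: e1 le_supI1 del: usem.simps)
qed

theorem lemma8:
  fixes H :: "'a::heyting itself"
  shows
  \<comment> \<open>(a) redL\<close>
  "(\<forall>L Z \<Gamma> \<Delta>. wf_unitary (Euler L Z) \<longrightarrow>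
      (\<forall>z\<in>missing L Z. \<exists>l\<in>L. adj z l \<in> missing L Z) \<longrightarrow>
      valid_in H (image_mset (\<lambda>c. Unit (euler_red L Z c))
                    (mset_set {c\<in>L. missing (L - {c}) ((\<lambda>z. zone_red z c) ` Z) \<noteq> {}}) + \<Gamma>) \<Delta> \<longrightarrow>
      valid_in H (add_mset (Unit (Euler L Z)) \<Gamma>) \<Delta>)
  \<and> \<comment> \<open>(a) redR\<close>
   (\<forall>L Z \<Gamma> \<Delta>. wf_unitary (Euler L Z) \<longrightarrow>
      (\<forall>z\<in>missing L Z. \<exists>l\<in>L. adj z l \<in> missing L Z) \<longrightarrow>
      (\<forall>c\<in>{c\<in>L. missing (L - {c}) ((\<lambda>z. zone_red z c) ` Z) \<noteq> {}}.
          valid_in H \<Gamma> (add_mset (Unit (euler_red L Z c)) \<Delta>)) \<longrightarrow>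
      valid_in H \<Gamma> (add_mset (Unit (Euler L Z)) \<Delta>))
  \<and> \<comment> \<open>(b) mzsepL\<close>
   (\<forall>L Z Z1 Z2 \<Gamma> \<Delta>. wf_unitary (Euler L Z) \<longrightarrow> wf_unitary (Euler L Z1) \<longrightarrow>
      wf_unitary (Euler L Z2) \<longrightarrow> card (missing L Z) > 1 \<longrightarrow> Z1 \<inter> Z2 = Z \<longrightarrow>
      valid_in H (add_mset (Unit (Euler L Z1)) (add_mset (Unit (Euler L Z2)) \<Gamma>)) \<Delta> \<longrightarrow>
      valid_in H (add_mset (Unit (Euler L Z)) \<Gamma>) \<Delta>)
  \<and> \<comment> \<open>(b) mzsepR\<close>
   (\<forall>L Z Z1 Z2 \<Gamma> \<Delta>. wf_unitary (Euler L Z) \<longrightarrow> wf_unitary (Euler L Z1) \<longrightarrow>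
      wf_unitary (Euler L Z2) \<longrightarrow> card (missing L Z) > 1 \<longrightarrow> Z1 \<inter> Z2 = Z \<longrightarrow>
      valid_in H \<Gamma> (add_mset (Unit (Euler L Z1)) \<Delta>) \<longrightarrow>
      valid_in H \<Gamma> (add_mset (Unit (Euler L Z2)) \<Delta>) \<longrightarrow>
      valid_in H \<Gamma> (add_mset (Unit (Euler L Z)) \<Delta>))
  \<and> \<comment> \<open>(c) impdecL\<close>
   (\<forall>L Z z \<Gamma> \<Delta>. wf_unitary (Euler L Z) \<longrightarrow> missing L Z = {z} \<longrightarrow>
      (\<forall>n\<in>fst z. valid_in H (add_mset (Unit (Euler L Z)) \<Gamma>) {#Pos n#}) \<longrightarrow>
      (\<forall>m\<in>snd z. valid_in H (add_mset (Pos m) \<Gamma>) \<Delta>) \<longrightarrow>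
      valid_in H (add_mset (Unit (Euler L Z)) \<Gamma>) \<Delta>)
  \<and> \<comment> \<open>(c) impdecR\<close>
   (\<forall>L Z z \<Gamma> \<Delta>. wf_unitary (Euler L Z) \<longrightarrow> missing L Z = {z} \<longrightarrow>
      valid_in H (image_mset Pos (mset_set (fst z)) + \<Gamma>) (image_mset Pos (mset_set (snd z))) \<longrightarrow>
      valid_in H \<Gamma> (add_mset (Unit (Euler L Z)) \<Delta>))"
  apply (intro conjI allI impI)
       apply (rule partA_L, assumption+)
      apply (rule partA_R, assumption+)
     apply (rule partB_L, assumption+)
    apply (rule partB_R, assumption+)
   apply (rule partC_L, assumption+)
  apply (rule partC_R, assumption+)
  done

end
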